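(* For every $n\in\mathbb{N}$ there exists a map $\bar\Gamma\to\Gamma$, $f\mapsto\varphi_n^f$, such that $\varphi_n^{f+n^{-1}\lfloor nc\rfloor}=\varphi_n^f+\lfloor nc\rfloor$ for all $c\in\mathbb{R}$ and $f\in\bar\Gamma$, and $$\sup_{(x,y)\in\mathbb{R}^2}\Big|\tfrac1n\varphi_n^f(nx,\lfloor ny\rfloor)-f(x,y)\Big|\le\frac2n .$$
   Context: $\Gamma$ is the set of functions $h:\mathbb{R}\times\mathbb{Z}\to\mathbb{Z}$ such that (i) for every $y\in\mathbb{Z}$, $x\mapsto h(x,y)$ is piecewise constant with a locally finite set of jumps, each of size $\pm1$, and is upper semicontinuous; (ii) for every $x\in\mathbb{R}$, $y\in\mathbb{Z}$, $h(x,y+1)-h(x,y)\in\{-1,0\}$. $\bar\Gamma$ is the set of continuous $f:\mathbb{R}^2\to\mathbb{R}$ with $f(x,y_2)-f(x,y_1)\in[-(y_2-y_1),0]$ for all $x\in\mathbb{R}$ and $y_1\le y_2$. *)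

theory Defs
  imports "HOL-Analysis.Analysis"
begin

definition usc_real :: "(real \<Rightarrow> real) \<Rightarrow> bool" where
  "usc_real g \<longleftrightarrow> (\<forall>a. open {x. g x < a})"

definition pw_const_unit_jumps :: "(real \<Rightarrow> int) \<Rightarrow> bool" where
  "pw_const_unit_jumps g \<longleftrightarrow>
     (\<forall>a b. finite ({x. \<not> isCont (\<lambda>t. real_of_int (g t)) x} \<inter> {a..b})) \<and>
     (\<forall>x. \<not> isCont (\<lambda>t. real_of_int (g t)) x \<longrightarrow>
        (\<exists>e>0. \<exists>l r. (\<forall>t\<in>{x-e<..<x}. g t = l) \<and> (\<forall>t\<in>{x<..<x+e}. g t = r)
                   \<and> \<bar>r - l\<bar> = 1)) \<and>
     usc_real (\<lambda>t. real_of_int (g t))"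

definition Gamma :: "(real \<Rightarrow> int \<Rightarrow> int) set" where
  "Gamma = {h. (\<forall>y. pw_const_unit_jumps (\<lambda>x. h x y)) \<and>
               (\<forall>x y. h x (y + 1) - h x y \<in> {-1, 0})}"

definition Gamma_bar :: "(real \<Rightarrow> real \<Rightarrow> real) set" where
  "Gamma_bar = {f. continuous_on UNIV (\<lambda>(x, y). f x y) \<and>
                   (\<forall>x y1 y2. y1 \<le> y2 \<longrightarrow>
                      f x y2 - f x y1 \<in> {-(y2 - y1)..0})}"

end

theory Submission
  imports Defs
begin

definition segP :: "(real \<Rightarrow> real) \<Rightarrow> int \<Rightarrow> real \<Rightarrow> bool" where
  "segP u k X \<longleftrightarrow> (\<exists>t. real_of_int k \<le> u t \<and>
      (\<forall>s. min X t \<le> s \<and> s \<le> max X t \<and> s \<noteq> X \<longrightarrow> real_of_int k - 1 < u s))"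

definition Hf :: "(real \<Rightarrow> real) \<Rightarrow> real \<Rightarrow> int" where
  "Hf u X = (if segP u (\<lfloor>u X\<rfloor> + 1) X then \<lfloor>u X\<rfloor> + 1 else \<lfloor>u X\<rfloor>)"

lemma cont_nhds:
  fixes u :: "real \<Rightarrow> real"
  assumes "isCont u p" "eventually P (nhds (u p))"
  shows "\<exists>d>0. \<forall>s. \<bar>s - p\<bar> < d \<longrightarrow> P (u s)"
proof -
  have "(u \<longlongrightarrow> u p) (nhds p)" using assms(1)
    by (simp add: isCont_def tendsto_at_iff_tendsto_nhds)
  hence "eventually (\<lambda>s. P (u s)) (nhds p)" using assms(2) by (rule filterlim_iff[THEN iffD1, rule_format]) 
  then obtain d where "d > 0" "\<forall>y. dist y p < d \<longrightarrow> P (u y)" unfolding eventually_nhds_metric by auto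
  thus ?thesis unfolding dist_real_def by auto
qed

lemma cont_lt:
  fixes u :: "real \<Rightarrow> real"
  assumes "isCont u p" "u p < c"
  shows "\<exists>d>0. \<forall>s. \<bar>s - p\<bar> < d \<longrightarrow> u s < c"
proof -
  have "eventually (\<lambda>y. y < c) (nhds (u p))"
    using eventually_nhds_in_open[of "{..<c}" "u p"] assms(2) by auto
  thus ?thesis using cont_nhds[OF assms(1), of "\<lambda>y. y < c"] by auto
qed

lemma cont_gt:
  fixes u :: "real \<Rightarrow> real"
  assumes "isCont u p" "c < u p"
  shows "\<exists>d>0. \<forall>s. \<bar>s - p\<bar> < d \<longrightarrow> c < u s"
proof -
  have "eventually (\<lambda>y. c < y) (nhds (u p))"
    using eventually_nhds_in_open[of "{c<..}" "u p"] assms(2) by auto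
  thus ?thesis using cont_nhds[OF assms(1), of "\<lambda>y. c < y"] by auto
qed

lemma segP_le: "k \<le> \<lfloor>u X\<rfloor> \<Longrightarrow> segP u k X"
  unfolding segP_def by (rule exI[of _ X]) (auto simp: le_floor_iff)

lemma segP_mono: "segP u k X \<Longrightarrow> j \<le> k \<Longrightarrow> segP u j X"
  unfolding segP_def
  by (smt (verit, best) of_int_le_iff)

lemma segP_L1:
  assumes cont: "\<And>x. isCont u x" and P: "segP u k X"
  shows "real_of_int k - 1 \<le> u X"
proof (rule ccontr)
  assume a: "\<not> ?thesis"
  obtain t where t: "real_of_int k \<le> u t"
    "\<forall>s. min X t \<le> s \<and> s \<le> max X t \<and> s \<noteq> X \<longrightarrow> real_of_int k - 1 < u s"
    using P unfolding segP_def by auto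
  obtain d where d: "d > 0" "\<forall>s. \<bar>s - X\<bar> < d \<longrightarrow> u s < real_of_int k - 1"
    using cont_lt[OF cont, of X "real_of_int k - 1"] a by auto
  have "t \<noteq> X" using t(1) a by auto
  show False
  proof (cases "X < t")
    case True
    define s where "s = min (X + d/2) t"
    have "u s < real_of_int k - 1" using d True by (intro d(2)[rule_format]) (auto simp: s_def)
    moreover have "real_of_int k - 1 < u s" using d True by (intro t(2)[rule_format]) (auto simp: s_def)
    ultimately show False by auto
  next
    case False
    hence Tl: "t < X" using \<open>t \<noteq> X\<close> by auto
    define s where "s = max (X - d/2) t"
    have "u s < real_of_int k - 1" using d Tl by (intro d(2)[rule_format]) (auto simp: s_def)
    moreover have "real_of_int k - 1 < u s" using d Tl by (intro t(2)[rule_format]) (auto simp: s_def)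
    ultimately show False by auto
  qed
qed

lemma Hf_iff:
  assumes cont: "\<And>x. isCont u x"
  shows "k \<le> Hf u X \<longleftrightarrow> segP u k X"
proof -
  have 1: "segP u k X \<Longrightarrow> k \<le> \<lfloor>u X\<rfloor> + 1"
    using segP_L1[OF cont, of k X] by (simp add: le_floor_iff) linarith
  show ?thesis
  proof (cases "segP u (\<lfloor>u X\<rfloor> + 1) X")
    case True
    then show ?thesis using 1 segP_mono[OF True, of k] by (auto simp: Hf_def)
  next
    case False
    then show ?thesis using 1 segP_le[of k u X] by (auto simp: Hf_def) (metis antisym_conv1 False zle_add1_eq_le)
  qed
qed

lemma Hf_bounds: "\<lfloor>u X\<rfloor> \<le> Hf u X" "Hf u X \<le> \<lfloor>u X\<rfloor> + 1"
  by (auto simp: Hf_def)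

lemma segP_between:
  assumes "real_of_int k \<le> u t"
    "\<forall>s. min X t \<le> s \<and> s \<le> max X t \<and> s \<noteq> X \<longrightarrow> real_of_int k - 1 < u s"
    "min X t \<le> X'" "X' \<le> max X t"
  shows "segP u k X'"
  unfolding segP_def
proof (rule exI[of _ t], intro conjI allI impI)
  show "real_of_int k \<le> u t" by fact
  fix s assume s: "min X' t \<le> s \<and> s \<le> max X' t \<and> s \<noteq> X'"
  show "real_of_int k - 1 < u s"
  proof (cases "s = X")
    case True
    with s assms(3,4) have False by (auto simp: min_def max_def split: if_splits)
    thus ?thesis ..
  next
    case False
    with s assms(3,4) show ?thesis by (intro assms(2)[rule_format]) (auto simp: min_def max_def split: if_splits)
  qed
qed

lemma segP_Q:
  assumes "segP u k X" "\<forall>s. min X X' \<le> s \<and> s \<le> max X X' \<longrightarrow> real_of_int k - 1 < u s"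
  shows "segP u k X'"
proof -
  obtain t where t: "real_of_int k \<le> u t"
    "\<forall>s. min X t \<le> s \<and> s \<le> max X t \<and> s \<noteq> X \<longrightarrow> real_of_int k - 1 < u s"
    using assms(1) unfolding segP_def by auto
  show ?thesis unfolding segP_def
  proof (rule exI[of _ t], intro conjI allI impI)
    show "real_of_int k \<le> u t" by fact
    fix s assume s: "min X' t \<le> s \<and> s \<le> max X' t \<and> s \<noteq> X'"
    show "real_of_int k - 1 < u s"
    proof (cases "min X t \<le> s \<and> s \<le> max X t \<and> s \<noteq> X")
      case True then show ?thesis using t(2) by auto
    next
      case False
      with s have "min X X' \<le> s \<and> s \<le> max X X'" by (auto simp: min_def max_def split: if_splits)
      then show ?thesis using assms(2) by auto
    qed
  qed
qed

lemma interior: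
  assumes cont: "\<And>x. isCont u x" and gt: "real_of_int k - 1 < u p"
  shows "\<exists>d>0. \<forall>X. \<bar>X - p\<bar> < d \<longrightarrow> (segP u k X \<longleftrightarrow> segP u k p)"
proof -
  obtain d where d: "d > 0" "\<forall>s. \<bar>s - p\<bar> < d \<longrightarrow> real_of_int k - 1 < u s"
    using cont_gt[OF cont gt] by auto
  show ?thesis
  proof (rule exI[of _ d], intro conjI allI impI)
    fix X assume X: "\<bar>X - p\<bar> < d"
    have seg: "\<forall>s. min X p \<le> s \<and> s \<le> max X p \<longrightarrow> real_of_int k - 1 < u s"
      "\<forall>s. min p X \<le> s \<and> s \<le> max p X \<longrightarrow> real_of_int k - 1 < u s"
      using X d(2) by (auto simp: min_def max_def abs_if split: if_splits)
    show "segP u k X \<longleftrightarrow> segP u k p"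
      using segP_Q[OF _ seg(1)] segP_Q[OF _ seg(2)] by blast
  qed (use d in auto)
qed

lemma right_witness:
  fixes u :: "real \<Rightarrow> real"
  assumes "u p \<le> real_of_int k - 1" "\<forall>s. p < s \<and> s < p + d \<longrightarrow> u s < real_of_int k"
    "p < X" "X < p + d" "real_of_int k \<le> u t"
    "\<forall>s. min X t \<le> s \<and> s \<le> max X t \<and> s \<noteq> X \<longrightarrow> real_of_int k - 1 < u s"
  shows "p + d \<le> t"
proof (rule ccontr)
  assume "\<not> ?thesis"
  hence t: "t < p + d" by auto
  show False
  proof (cases "p < t")
    case True thus False using assms(2,5) t by force
  next
    case False
    hence "t \<le> p" by auto
    hence "min X t \<le> p \<and> p \<le> max X t \<and> p \<noteq> X" using assms(3) by auto
    thus False using assms(6,1) by force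
  qed
qed

lemma right_upclosed:
  assumes "u p \<le> real_of_int k - 1" "\<forall>s. p < s \<and> s < p + d \<longrightarrow> u s < real_of_int k"
    "p < X" "segP u k X" "X \<le> X'" "X' < p + d"
  shows "segP u k X'"
proof -
  obtain t where t: "real_of_int k \<le> u t"
    "\<forall>s. min X t \<le> s \<and> s \<le> max X t \<and> s \<noteq> X \<longrightarrow> real_of_int k - 1 < u s"
    using assms(4) unfolding segP_def by auto
  have "p + d \<le> t" using right_witness[OF assms(1,2,3) _ t] assms(5,6) by auto
  thus ?thesis using segP_between[OF t, of X'] assms(5,6) by auto
qed

lemma right_side:
  assumes cont: "\<And>x. isCont u x"
  shows "(\<exists>b>p. \<forall>X. p < X \<and> X < b \<longrightarrow> segP u k X) \<or> (\<exists>b>p. \<forall>X. p < X \<and> X < b \<longrightarrow> \<not> segP u k X)"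
proof -
  consider "u p < real_of_int k - 1" | "real_of_int k - 1 < u p" | "u p = real_of_int k - 1" by linarith
  then show ?thesis
  proof cases
    case 1
    obtain d where d: "d > 0" "\<forall>s. \<bar>s - p\<bar> < d \<longrightarrow> u s < real_of_int k - 1"
      using cont_lt[OF cont 1] by auto
    have "\<forall>X. p < X \<and> X < p + d \<longrightarrow> \<not> segP u k X"
    proof (intro allI impI)
      fix X assume "p < X \<and> X < p + d"
      hence "u X < real_of_int k - 1" using d(2) by auto
      thus "\<not> segP u k X" using segP_L1[OF cont, of k X] by linarith
    qed
    thus ?thesis using d(1) by (intro disjI2 exI[of _ "p+d"]) auto
  next
    case 2
    obtain d where d: "d > 0" "\<forall>X. \<bar>X - p\<bar> < d \<longrightarrow> (segP u k X \<longleftrightarrow> segP u k p)"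
      using interior[OF cont 2] by auto
    have dd: "segP u k X \<longleftrightarrow> segP u k p" if "p < X" "X < p + d" for X
    proof -
      have "\<bar>X - p\<bar> < d" using that by simp
      thus ?thesis using d(2) by blast
    qed
    show ?thesis
    proof (cases "segP u k p")
      case True
      hence "\<forall>X. p < X \<and> X < p + d \<longrightarrow> segP u k X" using dd by blast
      thus ?thesis using d(1) by (intro disjI1 exI[of _ "p+d"]) simp
    next
      case False
      hence "\<forall>X. p < X \<and> X < p + d \<longrightarrow> \<not> segP u k X" using dd by blast
      thus ?thesis using d(1) by (intro disjI2 exI[of _ "p+d"]) simp
    qed
  next
    case 3
    obtain d where d: "d > 0" "\<forall>s. \<bar>s - p\<bar> < d \<longrightarrow> u s < real_of_int k"
      using cont_lt[OF cont, of p "real_of_int k"] 3 by auto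
    have d2: "\<forall>s. p < s \<and> s < p + d \<longrightarrow> u s < real_of_int k" using d(2) by auto
    show ?thesis
    proof (cases "\<exists>b>p. \<forall>X. p < X \<and> X < b \<longrightarrow> \<not> segP u k X")
      case True thus ?thesis by blast
    next
      case False
      hence acc: "\<forall>b>p. \<exists>X. p < X \<and> X < b \<and> segP u k X" by auto
      have "\<forall>X. p < X \<and> X < p + d \<longrightarrow> segP u k X"
      proof (intro allI impI)
        fix X assume X: "p < X \<and> X < p + d"
        obtain X' where X': "p < X'" "X' < X" "segP u k X'" using acc[rule_format, of X] X by blast
        have up: "u p \<le> real_of_int k - 1" using 3 by simp
        show "segP u k X" by (rule right_upclosed[OF up d2 X'(1,3)]) (use X X' in auto)
      qed
      thus ?thesis using d(1) by (intro disjI1 exI[of _ "p+d"]) auto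
    qed
  qed
qed

lemma right_acc:
  assumes cont: "\<And>x. isCont u x" and b: "b > p" "\<forall>X. p < X \<and> X < b \<longrightarrow> segP u k X"
  shows "segP u k p"
proof -
  consider "u p < real_of_int k - 1" | "real_of_int k - 1 < u p" | "u p = real_of_int k - 1" by linarith
  then show ?thesis
  proof cases
    case 1
    obtain d where d: "d > 0" "\<forall>s. \<bar>s - p\<bar> < d \<longrightarrow> u s < real_of_int k - 1"
      using cont_lt[OF cont 1] by auto
    define X where "X = p + min d (b - p) / 2"
    have XX0: "p < X \<and> X < b \<and> X < p + d" unfolding X_def using b(1) d(1) by (auto simp add: min_def field_simps)
    hence XX: "p < X" "X < b" "X < p + d" by auto
    have "segP u k X" using XX by (intro b(2)[rule_format]) auto
    moreover have "u X < real_of_int k - 1" using XX by (intro d(2)[rule_format]) auto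
    ultimately show ?thesis using segP_L1[OF cont, of k X] by linarith
  next
    case 2
    obtain d where d: "d > 0" "\<forall>X. \<bar>X - p\<bar> < d \<longrightarrow> (segP u k X \<longleftrightarrow> segP u k p)"
      using interior[OF cont 2] by auto
    define X where "X = p + min d (b - p) / 2"
    have XX0: "p < X \<and> X < b \<and> X < p + d" unfolding X_def using b(1) d(1) by (auto simp add: min_def field_simps)
    hence XX: "p < X" "X < b" "X < p + d" by auto
    have "segP u k X" using XX by (intro b(2)[rule_format]) auto
    moreover have "\<bar>X - p\<bar> < d" using XX by simp
    ultimately show ?thesis using d(2) by blast
  next
    case 3
    obtain d where d: "d > 0" "\<forall>s. \<bar>s - p\<bar> < d \<longrightarrow> u s < real_of_int k"
      using cont_lt[OF cont, of p "real_of_int k"] 3 by auto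
    define e where "e = min d (b - p)"
    have e: "e > 0" "\<forall>s. p < s \<and> s < p + e \<longrightarrow> u s < real_of_int k"
      "\<forall>X. p < X \<and> X < p + e \<longrightarrow> segP u k X"
      using d b by (auto simp: e_def)
    define X1 where "X1 = p + e/2"
    have X1: "p < X1" "X1 < p + e" using e(1) by (auto simp: X1_def)
    obtain t where t: "real_of_int k \<le> u t"
      "\<forall>s. min X1 t \<le> s \<and> s \<le> max X1 t \<and> s \<noteq> X1 \<longrightarrow> real_of_int k - 1 < u s"
      using e(3) X1 unfolding segP_def by blast
    have pt: "p + e \<le> t" using right_witness[OF _ e(2) X1 t] 3 by auto
    show ?thesis unfolding segP_def
    proof (rule exI[of _ t], intro conjI allI impI)
      show "real_of_int k \<le> u t" by fact
      fix s assume s: "min p t \<le> s \<and> s \<le> max p t \<and> s \<noteq> p"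
      have mm: "min p t = p" "max p t = t" "min X1 t = X1" "max X1 t = t" using pt X1 e(1) by auto
      have s2: "p < s" "s \<le> t" using s mm(1,2) by auto
      show "real_of_int k - 1 < u s"
      proof (cases "s < p + e")
        case True
        define X' where "X' = (p + s) / 2"
        have X': "p < X'" "X' < p + e" "X' < s" using s2 True unfolding X'_def by (auto simp: field_simps)
        obtain t' where t': "real_of_int k \<le> u t'"
          "\<forall>s. min X' t' \<le> s \<and> s \<le> max X' t' \<and> s \<noteq> X' \<longrightarrow> real_of_int k - 1 < u s"
          using e(3) X' unfolding segP_def by blast
        have pt': "p + e \<le> t'" using right_witness[OF _ e(2) X'(1,2) t'] 3 by auto
        hence "min X' t' = X'" "max X' t' = t'" using X' by auto
        thus ?thesis using t'(2) X' True pt' by auto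
      next
        case False
        hence "min X1 t \<le> s \<and> s \<le> max X1 t \<and> s \<noteq> X1" using mm s2 X1 by auto
        thus ?thesis using t(2) by auto
      qed
    qed
  qed
qed

lemma both_sides_or:
  assumes "segP u k p" "u p = real_of_int k - 1"
  shows "(\<exists>b>p. \<forall>X. p < X \<and> X < b \<longrightarrow> segP u k X) \<or> (\<exists>b<p. \<forall>X. b < X \<and> X < p \<longrightarrow> segP u k X)"
proof -
  obtain t where t: "real_of_int k \<le> u t"
    "\<forall>s. min p t \<le> s \<and> s \<le> max p t \<and> s \<noteq> p \<longrightarrow> real_of_int k - 1 < u s"
    using assms(1) unfolding segP_def by auto
  have "t \<noteq> p" using t(1) assms(2) by auto
  then consider "p < t" | "t < p" by linarith
  then show ?thesis
  proof cases
    case 1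
    have "\<forall>X. p < X \<and> X < t \<longrightarrow> segP u k X" using segP_between[OF t] 1 by auto
    then show ?thesis using 1 by blast
  next
    case 2
    have "\<forall>X. t < X \<and> X < p \<longrightarrow> segP u k X" using segP_between[OF t] 2 by auto
    then show ?thesis using 2 by blast
  qed
qed

lemma segP_refl: "segP (\<lambda>x. u (- x)) k X \<longleftrightarrow> segP u k (- X)"
proof
  assume "segP (\<lambda>x. u (- x)) k X"
  then obtain t where t: "real_of_int k \<le> u (- t)"
    "\<forall>s. min X t \<le> s \<and> s \<le> max X t \<and> s \<noteq> X \<longrightarrow> real_of_int k - 1 < u (- s)"
    unfolding segP_def by auto
  show "segP u k (- X)" unfolding segP_def
  proof (rule exI[of _ "- t"], intro conjI allI impI)
    show "real_of_int k \<le> u (- t)" by fact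
    fix s assume "min (- X) (- t) \<le> s \<and> s \<le> max (- X) (- t) \<and> s \<noteq> - X"
    hence "min X t \<le> - s \<and> - s \<le> max X t \<and> - s \<noteq> X" by (auto simp: min_def max_def split: if_splits)
    thus "real_of_int k - 1 < u s" using t(2) by force
  qed
next
  assume "segP u k (- X)"
  then obtain t where t: "real_of_int k \<le> u t"
    "\<forall>s. min (- X) t \<le> s \<and> s \<le> max (- X) t \<and> s \<noteq> - X \<longrightarrow> real_of_int k - 1 < u s"
    unfolding segP_def by auto
  show "segP (\<lambda>x. u (- x)) k X" unfolding segP_def
  proof (rule exI[of _ "- t"], intro conjI allI impI)
    show "real_of_int k \<le> u (- (- t))" using t(1) by simp
    fix s assume "min X (- t) \<le> s \<and> s \<le> max X (- t) \<and> s \<noteq> X"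
    hence "min (- X) t \<le> - s \<and> - s \<le> max (- X) t \<and> - s \<noteq> - X" by (auto simp: min_def max_def split: if_splits)
    thus "real_of_int k - 1 < u (- s)" using t(2) by blast
  qed
qed

lemma cont_refl:
  fixes u :: "real \<Rightarrow> real"
  assumes "\<And>x. isCont u x" shows "\<And>x. isCont (\<lambda>x. u (- x)) x"
  by (rule isCont_o2[OF _ assms]) (intro continuous_intros)

lemma Hf_refl: "Hf (\<lambda>x. u (- x)) X = Hf u (- X)"
  unfolding Hf_def segP_refl by simp

lemma left_acc:
  assumes cont: "\<And>x. isCont u x" and b: "b < p" "\<forall>X. b < X \<and> X < p \<longrightarrow> segP u k X"
  shows "segP u k p"
proof -
  have "segP (\<lambda>x. u (- x)) k (- p)"
  proof (rule right_acc[OF cont_refl[OF cont], of "- p" "- b"])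
    show "- b > - p" using b(1) by simp
    show "\<forall>X. - p < X \<and> X < - b \<longrightarrow> segP (\<lambda>x. u (- x)) k X"
    proof (intro allI impI)
      fix X assume "- p < X \<and> X < - b"
      hence "b < - X \<and> - X < p" by auto
      thus "segP (\<lambda>x. u (- x)) k X" using b(2) segP_refl by auto
    qed
  qed
  thus ?thesis using segP_refl by (metis minus_minus)
qed

lemma side_levels:
  assumes cont: "\<And>x. isCont u x"
  shows "\<exists>b>p. \<forall>X Y. p < X \<and> X < b \<and> p < Y \<and> Y < b \<longrightarrow> (segP u k X \<longleftrightarrow> segP u k Y)"
proof -
  from right_side[OF cont, of p k] show ?thesis
  proof
    assume "\<exists>b>p. \<forall>X. p < X \<and> X < b \<longrightarrow> segP u k X"
    then obtain b where "b > p" "\<forall>X. p < X \<and> X < b \<longrightarrow> segP u k X" by auto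
    thus ?thesis by blast
  next
    assume "\<exists>b>p. \<forall>X. p < X \<and> X < b \<longrightarrow> \<not> segP u k X"
    then obtain b where "b > p" "\<forall>X. p < X \<and> X < b \<longrightarrow> \<not> segP u k X" by auto
    thus ?thesis by blast
  qed
qed

lemma Hf_range:
  assumes "\<bar>u X - u p\<bar> < 1"
  shows "\<lfloor>u p\<rfloor> - 1 \<le> Hf u X \<and> Hf u X \<le> \<lfloor>u p\<rfloor> + 2"
proof -
  have "\<lfloor>u p\<rfloor> - 1 \<le> \<lfloor>u X\<rfloor>" using assms by (simp add: le_floor_iff) linarith
  moreover have "\<lfloor>u X\<rfloor> \<le> \<lfloor>u p\<rfloor> + 1" using assms by (simp add: floor_le_iff) linarith
  ultimately show ?thesis using Hf_bounds[of u X] by auto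
qed

lemma Hf_eq_levels:
  assumes cont: "\<And>x. isCont u x"
    and "\<lfloor>u p\<rfloor> - 1 \<le> Hf u X \<and> Hf u X \<le> \<lfloor>u p\<rfloor> + 2"
    and "\<lfloor>u p\<rfloor> - 1 \<le> Hf u Y \<and> Hf u Y \<le> \<lfloor>u p\<rfloor> + 2"
    and "\<forall>k. \<lfloor>u p\<rfloor> \<le> k \<and> k \<le> \<lfloor>u p\<rfloor> + 2 \<longrightarrow> (segP u k X \<longleftrightarrow> segP u k Y)"
  shows "Hf u X = Hf u Y"
proof (rule ccontr)
  assume ne: "Hf u X \<noteq> Hf u Y"
  show False
  proof (cases "Hf u X < Hf u Y")
    case True
    have "segP u (Hf u Y) Y" using Hf_iff[OF cont] by blast
    hence "segP u (Hf u Y) X" using assms(2-4) True by auto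
    hence "Hf u Y \<le> Hf u X" using Hf_iff[OF cont] by blast
    thus False using True by auto
  next
    case False
    hence F: "Hf u Y < Hf u X" using ne by auto
    have "segP u (Hf u X) X" using Hf_iff[OF cont] by blast
    hence "segP u (Hf u X) Y" using assms(2-4) F by auto
    hence "Hf u X \<le> Hf u Y" using Hf_iff[OF cont] by blast
    thus False using F by auto
  qed
qed

lemma right_const:
  fixes u :: "real \<Rightarrow> real"
  assumes cont: "\<And>x. isCont u x"
  shows "\<exists>b>p. \<exists>r. \<forall>X. p < X \<and> X < b \<longrightarrow> Hf u X = r"
proof -
  define m where "m = \<lfloor>u p\<rfloor>"
  obtain d1 where d1: "d1 > 0" "\<forall>s. \<bar>s - p\<bar> < d1 \<longrightarrow> u s < u p + 1"
    using cont_lt[OF cont, of p "u p + 1"] by auto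
  obtain d2 where d2: "d2 > 0" "\<forall>s. \<bar>s - p\<bar> < d2 \<longrightarrow> u p - 1 < u s"
    using cont_gt[OF cont, of "u p - 1" p] by auto
  obtain b0 where b0: "b0 > p" "\<forall>X Y. p < X \<and> X < b0 \<and> p < Y \<and> Y < b0 \<longrightarrow> (segP u m X \<longleftrightarrow> segP u m Y)"
    using side_levels[OF cont] by blast
  obtain b1 where b1: "b1 > p" "\<forall>X Y. p < X \<and> X < b1 \<and> p < Y \<and> Y < b1 \<longrightarrow> (segP u (m+1) X \<longleftrightarrow> segP u (m+1) Y)"
    using side_levels[OF cont] by blast
  obtain b2 where b2: "b2 > p" "\<forall>X Y. p < X \<and> X < b2 \<and> p < Y \<and> Y < b2 \<longrightarrow> (segP u (m+2) X \<longleftrightarrow> segP u (m+2) Y)"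
    using side_levels[OF cont] by blast
  define B where "B = min (min (p + d1) (p + d2)) (min b0 (min b1 b2))"
  have B: "B > p" using d1 d2 b0 b1 b2 by (simp add: B_def)
  define Z where "Z = (p + B) / 2"
  have Z: "p < Z" "Z < B" using B by (auto simp: Z_def field_simps)
  have rng: "m - 1 \<le> Hf u X \<and> Hf u X \<le> m + 2" if "p < X" "X < B" for X
  proof -
    have "\<bar>u X - u p\<bar> < 1" using d1(2)[rule_format, of X] d2(2)[rule_format, of X] that
      by (auto simp: B_def)
    thus ?thesis using Hf_range[of u X p] by (simp add: m_def)
  qed
  have "\<forall>X. p < X \<and> X < B \<longrightarrow> Hf u X = Hf u Z"
  proof (intro allI impI)
    fix X assume X: "p < X \<and> X < B"
    have lv: "\<forall>k. m \<le> k \<and> k \<le> m + 2 \<longrightarrow> (segP u k X \<longleftrightarrow> segP u k Z)"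
    proof (intro allI impI)
      fix k assume k: "m \<le> k \<and> k \<le> m + 2"
      hence "k = m \<or> k = m + 1 \<or> k = m + 2" by auto
      moreover have "X < b0" "X < b1" "X < b2" "Z < b0" "Z < b1" "Z < b2" using X Z by (auto simp: B_def)
      ultimately show "segP u k X \<longleftrightarrow> segP u k Z" using b0(2) b1(2) b2(2) X Z by blast
    qed
    show "Hf u X = Hf u Z"
      by (rule Hf_eq_levels[OF cont]) (use rng[of X] rng[of Z] X Z lv in \<open>auto simp: m_def\<close>)
  qed
  thus ?thesis using B by blast
qed

lemma left_const:
  fixes u :: "real \<Rightarrow> real"
  assumes cont: "\<And>x. isCont u x"
  shows "\<exists>a<p. \<exists>l. \<forall>X. a < X \<and> X < p \<longrightarrow> Hf u X = l"
proof -
  obtain b r where br: "b > - p" "\<forall>X. - p < X \<and> X < b \<longrightarrow> Hf (\<lambda>x. u (- x)) X = r"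
    using right_const[OF cont_refl[OF cont], of "- p"] by blast
  have "\<forall>X. - b < X \<and> X < p \<longrightarrow> Hf u X = r"
  proof (intro allI impI)
    fix X assume "- b < X \<and> X < p"
    hence "- p < - X \<and> - X < b" by auto
    hence "Hf (\<lambda>x. u (- x)) (- X) = r" using br(2) by blast
    thus "Hf u X = r" by (simp add: Hf_refl)
  qed
  moreover have "- b < p" using br(1) by simp
  ultimately show ?thesis by blast
qed

lemma interior_right:
  fixes u :: "real \<Rightarrow> real"
  assumes cont: "\<And>x. isCont u x" and P: "segP u k p" and gt: "real_of_int k - 1 < u p"
    and b: "b > p" "\<forall>X. p < X \<and> X < b \<longrightarrow> Hf u X = r"
  shows "k \<le> r"
proof -
  obtain d where d: "d > 0" "\<forall>X. \<bar>X - p\<bar> < d \<longrightarrow> (segP u k X \<longleftrightarrow> segP u k p)"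
    using interior[OF cont gt] by auto
  define X where "X = p + min d (b - p) / 2"
  have XX0: "p < X \<and> X < b \<and> X < p + d" unfolding X_def using b(1) d(1) by (auto simp add: min_def field_simps)
  hence "\<bar>X - p\<bar> < d" by simp
  hence "segP u k X" using d(2) P by blast
  hence "k \<le> Hf u X" using Hf_iff[OF cont] by blast
  thus ?thesis using b(2) XX0 by auto
qed

lemma interior_left:
  fixes u :: "real \<Rightarrow> real"
  assumes cont: "\<And>x. isCont u x" and P: "segP u k p" and gt: "real_of_int k - 1 < u p"
    and b: "a < p" "\<forall>X. a < X \<and> X < p \<longrightarrow> Hf u X = r"
  shows "k \<le> r"
proof -
  obtain d where d: "d > 0" "\<forall>X. \<bar>X - p\<bar> < d \<longrightarrow> (segP u k X \<longleftrightarrow> segP u k p)"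
    using interior[OF cont gt] by auto
  define X where "X = p - min d (p - a) / 2"
  have XX0: "a < X \<and> X < p \<and> p - d < X" unfolding X_def using b(1) d(1) by (auto simp add: min_def field_simps)
  hence "\<bar>X - p\<bar> < d" by simp
  hence "segP u k X" using d(2) P by blast
  hence "k \<le> Hf u X" using Hf_iff[OF cont] by blast
  thus ?thesis using b(2) XX0 by auto
qed

lemma local_struct:
  fixes u :: "real \<Rightarrow> real"
  assumes cont: "\<And>x. isCont u x"
  obtains a b l r where "a < p" "p < b" "\<forall>X. a < X \<and> X < p \<longrightarrow> Hf u X = l"
     "\<forall>X. p < X \<and> X < b \<longrightarrow> Hf u X = r" "l \<le> Hf u p" "r \<le> Hf u p"
     "\<bar>l - r\<bar> \<le> 1" "l = r \<longrightarrow> Hf u p = l"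
proof -
  obtain a l where al: "a < p" "\<forall>X. a < X \<and> X < p \<longrightarrow> Hf u X = l"
    using left_const[OF cont] by blast
  obtain b r where br: "p < b" "\<forall>X. p < X \<and> X < b \<longrightarrow> Hf u X = r"
    using right_const[OF cont] by blast
  have lP: "segP u l X" if "a < X" "X < p" for X using al(2) that Hf_iff[OF cont] by auto
  have rP: "segP u r X" if "p < X" "X < b" for X using br(2) that Hf_iff[OF cont] by auto
  have lp: "l \<le> Hf u p"
    using left_acc[OF cont al(1)] lP Hf_iff[OF cont] by blast
  have rp: "r \<le> Hf u p"
    using right_acc[OF cont br(1)] rP Hf_iff[OF cont] by blast
  define c where "c = Hf u p"
  have Pk: "segP u k p" if "k \<le> c" for k using that Hf_iff[OF cont] by (auto simp: c_def)
  have atmost: "u p \<le> real_of_int k - 1" if "k \<le> c" "l < k \<or> r < k" for k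
  proof (rule ccontr)
    assume "\<not> ?thesis"
    hence gt: "real_of_int k - 1 < u p" by auto
    show False using that interior_right[OF cont Pk[OF that(1)] gt br] interior_left[OF cont Pk[OF that(1)] gt al]
      by auto
  qed
  have L1: "real_of_int k - 1 \<le> u p" if "k \<le> c" for k using segP_L1[OF cont Pk[OF that]] .
  have d1: "\<bar>l - r\<bar> \<le> 1"
  proof (rule ccontr)
    assume "\<not> ?thesis"
    hence "l + 2 \<le> r \<or> r + 2 \<le> l" by auto
    thus False
    proof
      assume h: "l + 2 \<le> r"
      have "u p \<le> real_of_int (l + 1) - 1" using atmost[of "l+1"] h rp by (auto simp: c_def)
      moreover have "real_of_int (l + 2) - 1 \<le> u p" using L1[of "l+2"] h rp by (auto simp: c_def)
      ultimately show False by simp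
    next
      assume h: "r + 2 \<le> l"
      have "u p \<le> real_of_int (r + 1) - 1" using atmost[of "r+1"] h lp by (auto simp: c_def)
      moreover have "real_of_int (r + 2) - 1 \<le> u p" using L1[of "r+2"] h lp by (auto simp: c_def)
      ultimately show False by simp
    qed
  qed
  have d2: "Hf u p = l" if "l = r"
  proof (rule ccontr)
    assume ne: "Hf u p \<noteq> l"
    hence lc: "l < c" using lp by (auto simp: c_def)
    have "u p \<le> real_of_int c - 1" using atmost[of c] lc by auto
    hence eq: "u p = real_of_int c - 1" using L1[of c] by auto
    from both_sides_or[OF Pk[OF order_refl] eq] show False
    proof
      assume "\<exists>b>p. \<forall>X. p < X \<and> X < b \<longrightarrow> segP u c X"
      then obtain b' where b': "b' > p" "\<forall>X. p < X \<and> X < b' \<longrightarrow> segP u c X" by auto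
      define X where "X = (p + min b b') / 2"
      have X: "p < X" "X < b" "X < b'" using b' br(1) by (auto simp: X_def min_def field_simps)
      have "c \<le> Hf u X" using b'(2) X Hf_iff[OF cont] by blast
      thus False using br(2) X lc that by auto
    next
      assume "\<exists>b<p. \<forall>X. b < X \<and> X < p \<longrightarrow> segP u c X"
      then obtain a' where a': "a' < p" "\<forall>X. a' < X \<and> X < p \<longrightarrow> segP u c X" by auto
      define X where "X = (p + max a a') / 2"
      have X: "X < p" "a < X" "a' < X" using a' al(1) by (auto simp: X_def max_def field_simps)
      have "c \<le> Hf u X" using a'(2) X Hf_iff[OF cont] by blast
      thus False using al(2) X lc by auto
    qed
  qed
  show ?thesis by (rule that[OF al(1) br(1) al(2) br(2) lp rp d1]) (use d2 in blast)
qed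

lemma const_isCont:
  fixes a b q :: real
  assumes "a < q" "q < b" "\<forall>t. a < t \<and> t < b \<longrightarrow> g t = c"
  shows "isCont (\<lambda>t. real_of_int (g t)) q"
proof -
  have "eventually (\<lambda>t. t \<in> {a<..<b}) (nhds q)"
    by (rule eventually_nhds_in_open) (use assms in \<open>auto simp: open_greaterThanLessThan\<close>)
  hence ev: "eventually (\<lambda>t. real_of_int (g t) = real_of_int c) (nhds q)"
    by (rule eventually_mono) (use assms(3) in auto)
  show ?thesis by (subst isCont_cong[OF ev]) simp
qed

lemma Hf_pw:
  fixes u :: "real \<Rightarrow> real"
  assumes cont: "\<And>x. isCont u x"
  shows "pw_const_unit_jumps (Hf u)"
proof -
  let ?G = "\<lambda>t. real_of_int (Hf u t)"
  have nb: "\<exists>e>0. \<forall>q. \<bar>q - p\<bar> < e \<and> q \<noteq> p \<longrightarrow> isCont ?G q" for p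
  proof -
    obtain a b l r where H: "a < p" "p < b" "\<forall>X. a < X \<and> X < p \<longrightarrow> Hf u X = l"
      "\<forall>X. p < X \<and> X < b \<longrightarrow> Hf u X = r" "l \<le> Hf u p" "r \<le> Hf u p"
      "\<bar>l - r\<bar> \<le> 1" "l = r \<longrightarrow> Hf u p = l"
      by (rule local_struct[OF cont, of p])
    show ?thesis
    proof (rule exI[of _ "min (p - a) (b - p)"], intro conjI allI impI)
      show "min (p - a) (b - p) > 0" using H by auto
      fix q assume q: "\<bar>q - p\<bar> < min (p - a) (b - p) \<and> q \<noteq> p"
      show "isCont ?G q"
      proof (cases "q < p")
        case True
        thus ?thesis using q H(3) by (intro const_isCont[of a q p _ l]) auto
      next
        case False
        thus ?thesis using q H(4) by (intro const_isCont[of p q b _ r]) auto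
      qed
    qed
  qed
  have fin: "finite ({x. \<not> isCont ?G x} \<inter> {a..b})" for a b
  proof (rule ccontr)
    assume inf: "infinite ({x. \<not> isCont ?G x} \<inter> {a..b})"
    obtain x where "x \<in> {a..b}" and lp: "x islimpt ({x. \<not> isCont ?G x} \<inter> {a..b})"
      using Heine_Borel_imp_Bolzano_Weierstrass[OF compact_Icc inf] by blast
    obtain e where e: "e > 0" "\<forall>q. \<bar>q - x\<bar> < e \<and> q \<noteq> x \<longrightarrow> isCont ?G q"
      using nb[of x] by blast
    obtain x' where x': "x' \<in> {x. \<not> isCont ?G x} \<inter> {a..b}" "x' \<noteq> x" "dist x' x < e"
      using islimpt_approachable[THEN iffD1, rule_format, OF lp e(1)] by blast
    have "\<bar>x' - x\<bar> < e" using x'(3) by (simp add: dist_real_def)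
    hence "isCont ?G x'" using e(2) x'(2) by blast
    thus False using x'(1) by blast
  qed
  have jmp: "\<exists>e>0. \<exists>l r. (\<forall>t\<in>{x-e<..<x}. Hf u t = l) \<and> (\<forall>t\<in>{x<..<x+e}. Hf u t = r) \<and> \<bar>r - l\<bar> = 1"
    if nc: "\<not> isCont ?G x" for x
  proof -
    obtain a b l r where H: "a < x" "x < b" "\<forall>X. a < X \<and> X < x \<longrightarrow> Hf u X = l"
      "\<forall>X. x < X \<and> X < b \<longrightarrow> Hf u X = r" "l \<le> Hf u x" "r \<le> Hf u x"
      "\<bar>l - r\<bar> \<le> 1" "l = r \<longrightarrow> Hf u x = l"
      by (rule local_struct[OF cont, of x])
    have "l \<noteq> r"
    proof
      assume "l = r"
      have "\<forall>t. a < t \<and> t < b \<longrightarrow> Hf u t = l"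
      proof (intro allI impI)
        fix t assume t: "a < t \<and> t < b"
        consider "t < x" | "t = x" | "x < t" by linarith
        thus "Hf u t = l" using H t \<open>l = r\<close> by cases auto
      qed
      thus False using const_isCont[OF H(1,2)] nc by blast
    qed
    hence "\<bar>r - l\<bar> = 1" using H(7) by auto
    moreover have "\<forall>t\<in>{x - min (x - a) (b - x)<..<x}. Hf u t = l" using H(3) by auto
    moreover have "\<forall>t\<in>{x<..<x + min (x - a) (b - x)}. Hf u t = r" using H(4) by auto
    moreover have "min (x - a) (b - x) > 0" using H by auto
    ultimately show ?thesis by blast
  qed
  have usc: "usc_real ?G"
    unfolding usc_real_def
  proof
    fix c
    show "open {x. ?G x < c}"
    proof (subst open_subopen, intro ballI)
      fix x assume x: "x \<in> {x. ?G x < c}"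
      obtain a b l r where H: "a < x" "x < b" "\<forall>X. a < X \<and> X < x \<longrightarrow> Hf u X = l"
      "\<forall>X. x < X \<and> X < b \<longrightarrow> Hf u X = r" "l \<le> Hf u x" "r \<le> Hf u x"
      "\<bar>l - r\<bar> \<le> 1" "l = r \<longrightarrow> Hf u x = l"
      by (rule local_struct[OF cont, of x])
      have "{a<..<b} \<subseteq> {x. ?G x < c}"
      proof
        fix t assume t: "t \<in> {a<..<b}"
        have "Hf u t \<le> Hf u x"
        proof -
          consider "t < x" | "t = x" | "x < t" by linarith
          thus ?thesis using H t by cases auto
        qed
        hence "real_of_int (Hf u t) \<le> real_of_int (Hf u x)" by simp
        thus "t \<in> {x. ?G x < c}" using x by auto
      qed
      thus "\<exists>T. open T \<and> x \<in> T \<and> T \<subseteq> {x. ?G x < c}" using H(1,2)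
        by (intro exI[of _ "{a<..<b}"]) auto
    qed
  qed
  show ?thesis unfolding pw_const_unit_jumps_def
  proof (intro conjI allI impI)
    fix a b show "finite ({x. \<not> isCont ?G x} \<inter> {a..b})" by (rule fin)
  next
    fix x assume "\<not> isCont ?G x"
    thus "\<exists>e>0. \<exists>l r. (\<forall>t\<in>{x-e<..<x}. Hf u t = l) \<and> (\<forall>t\<in>{x<..<x+e}. Hf u t = r) \<and> \<bar>r - l\<bar> = 1"
      by (rule jmp)
  next
    show "usc_real ?G" by (rule usc)
  qed
qed

lemma segP_fun_mono: "(\<And>x. u x \<le> v x) \<Longrightarrow> segP u k X \<Longrightarrow> segP v k X"
  unfolding segP_def by (meson less_le_trans order_trans)

lemma segP_fun_shift1:
  assumes "\<And>x. v x \<le> u x + 1" "segP v (k + 1) X"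
  shows "segP u k X"
proof -
  obtain t where t: "real_of_int (k + 1) \<le> v t"
    "\<forall>s. min X t \<le> s \<and> s \<le> max X t \<and> s \<noteq> X \<longrightarrow> real_of_int (k + 1) - 1 < v s"
    using assms(2) unfolding segP_def by blast
  show ?thesis unfolding segP_def
  proof (rule exI[of _ t], intro conjI allI impI)
    show "real_of_int k \<le> u t" using t(1) assms(1)[of t] by simp
    fix s assume "min X t \<le> s \<and> s \<le> max X t \<and> s \<noteq> X"
    hence "real_of_int (k + 1) - 1 < v s" using t(2) by blast
    thus "real_of_int k - 1 < u s" using assms(1)[of s] by simp
  qed
qed

lemma segP_add: "segP (\<lambda>x. u x + real_of_int M) (k + M) X \<longleftrightarrow> segP u k X"
  unfolding segP_def by simp

lemma Hf_add: "Hf (\<lambda>x. u x + real_of_int M) X = Hf u X + M"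
proof -
  have fl: "\<lfloor>u X + real_of_int M\<rfloor> = \<lfloor>u X\<rfloor> + M" by simp
  have "segP (\<lambda>x. u x + real_of_int M) (\<lfloor>u X\<rfloor> + M + 1) X \<longleftrightarrow> segP u (\<lfloor>u X\<rfloor> + 1) X"
    using segP_add[of u M "\<lfloor>u X\<rfloor> + 1" X] by (simp add: add_ac)
  thus ?thesis unfolding Hf_def fl by simp
qed

theorem proposition4p10:
  fixes n :: nat
  assumes "n \<ge> 1"
  shows "\<exists>\<phi> :: (real \<Rightarrow> real \<Rightarrow> real) \<Rightarrow> (real \<Rightarrow> int \<Rightarrow> int).
    (\<forall>f\<in>Gamma_bar. \<phi> f \<in> Gamma) \<and>
    (\<forall>c::real. \<forall>f\<in>Gamma_bar.
        \<phi> (\<lambda>x y. f x y + real_of_int \<lfloor>real n * c\<rfloor> / real n)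
          = (\<lambda>x y. \<phi> f x y + \<lfloor>real n * c\<rfloor>)) \<and>
    (\<forall>f\<in>Gamma_bar. \<forall>x y::real.
        \<bar>real_of_int (\<phi> f (real n * x) \<lfloor>real n * y\<rfloor>) / real n - f x y\<bar> \<le> 2 / real n)"
proof -
  have npos: "real n > 0" using assms by simp
  define \<Phi> :: "(real \<Rightarrow> real \<Rightarrow> real) \<Rightarrow> (real \<Rightarrow> int \<Rightarrow> int)" where
    "\<Phi> = (\<lambda>f X Y. Hf (\<lambda>x. real n * f (x / real n) (real_of_int Y / real n)) X)"
  have mono: "f x y2 - f x y1 \<in> {-(y2 - y1)..0}" if "f \<in> Gamma_bar" "y1 \<le> y2" for f x y1 y2
    using that unfolding Gamma_bar_def by blast
  have P1: "\<Phi> f \<in> Gamma" if f: "f \<in> Gamma_bar" for f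
  proof -
    have c2: "isCont (\<lambda>(x, y). f x y) z" for z
      using f unfolding Gamma_bar_def using continuous_on_eq_continuous_at[OF open_UNIV] by blast
    have cont: "isCont (\<lambda>x. real n * f (x / real n) (real_of_int Y / real n)) x" for Y x
    proof -
      have "isCont (\<lambda>x. (\<lambda>(x, y). f x y) (x / real n, real_of_int Y / real n)) x"
        by (rule isCont_o2[OF _ c2]) (use npos in \<open>auto intro!: continuous_intros\<close>)
      hence "isCont (\<lambda>x. f (x / real n) (real_of_int Y / real n)) x" by simp
      thus ?thesis by (intro continuous_intros)
    qed
    have pw: "pw_const_unit_jumps (\<lambda>x. \<Phi> f x Y)" for Y
      unfolding \<Phi>_def using Hf_pw[OF cont] by simp
    have col: "\<Phi> f X (Y + 1) - \<Phi> f X Y \<in> {-1, 0}" for X Y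
    proof -
      define u where "u = (\<lambda>x. real n * f (x / real n) (real_of_int Y / real n))"
      define v where "v = (\<lambda>x. real n * f (x / real n) (real_of_int (Y + 1) / real n))"
      have uv: "v x \<le> u x" "u x \<le> v x + 1" for x
      proof -
        have le: "real_of_int Y / real n \<le> real_of_int (Y + 1) / real n" using npos
          by (simp add: divide_right_mono)
        have "f (x / real n) (real_of_int (Y + 1) / real n) - f (x / real n) (real_of_int Y / real n)
              \<in> {-(real_of_int (Y + 1) / real n - real_of_int Y / real n)..0}"
          by (rule mono[OF f le])
        moreover have "real_of_int (Y + 1) / real n - real_of_int Y / real n = 1 / real n"
          by (simp add: diff_divide_distrib[symmetric])
        ultimately have a: "- (1 / real n) \<le> f (x / real n) (real_of_int (Y + 1) / real n) - f (x / real n) (real_of_int Y / real n)"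
          "f (x / real n) (real_of_int (Y + 1) / real n) - f (x / real n) (real_of_int Y / real n) \<le> 0" by auto
        have "real n * (- (1 / real n)) \<le> real n * (f (x / real n) (real_of_int (Y + 1) / real n) - f (x / real n) (real_of_int Y / real n))"
          using a(1) npos by (intro mult_left_mono) auto
        hence "-1 \<le> v x - u x" using npos by (simp add: u_def v_def right_diff_distrib)
        moreover have "real n * (f (x / real n) (real_of_int (Y + 1) / real n) - f (x / real n) (real_of_int Y / real n)) \<le> 0"
          using a(2) npos by (simp add: mult_nonneg_nonpos)
        hence "v x - u x \<le> 0" by (simp add: u_def v_def right_diff_distrib)
        ultimately show "v x \<le> u x" "u x \<le> v x + 1" by auto
      qed
      have cu: "\<And>x. isCont u x" unfolding u_def by (rule cont)
      have cv: "\<And>x. isCont v x" unfolding v_def by (rule cont)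
      have A: "Hf v X \<le> Hf u X"
      proof -
        have "segP v (Hf v X) X" using Hf_iff[OF cv] by blast
        hence "segP u (Hf v X) X" by (rule segP_fun_mono[rotated]) (rule uv(1))
        thus ?thesis using Hf_iff[OF cu] by blast
      qed
      have B: "Hf u X - 1 \<le> Hf v X"
      proof -
        have "segP u (Hf u X - 1 + 1) X" using Hf_iff[OF cu, of "Hf u X" X] by simp
        hence "segP v (Hf u X - 1) X" by (rule segP_fun_shift1[rotated]) (rule uv(2))
        thus ?thesis using Hf_iff[OF cv] by blast
      qed
      have "\<Phi> f X (Y + 1) = Hf v X" "\<Phi> f X Y = Hf u X" by (simp_all add: \<Phi>_def u_def v_def)
      thus ?thesis using A B by auto
    qed
    show ?thesis unfolding Gamma_def using pw col by blast
  qed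
  have P2: "\<Phi> (\<lambda>x y. f x y + real_of_int \<lfloor>real n * c\<rfloor> / real n) = (\<lambda>x y. \<Phi> f x y + \<lfloor>real n * c\<rfloor>)" for f c
  proof (intro ext)
    fix X Y
    define M where "M = \<lfloor>real n * c\<rfloor>"
    have "(\<lambda>x. real n * (f (x / real n) (real_of_int Y / real n) + real_of_int M / real n))
        = (\<lambda>x. real n * f (x / real n) (real_of_int Y / real n) + real_of_int M)"
      using npos by (simp add: distrib_left)
    thus "\<Phi> (\<lambda>x y. f x y + real_of_int \<lfloor>real n * c\<rfloor> / real n) X Y = \<Phi> f X Y + \<lfloor>real n * c\<rfloor>"
      unfolding \<Phi>_def M_def[symmetric] using Hf_add by simp
  qed
  have P3: "\<bar>real_of_int (\<Phi> f (real n * x) \<lfloor>real n * y\<rfloor>) / real n - f x y\<bar> \<le> 2 / real n"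
    if f: "f \<in> Gamma_bar" for f x y
  proof -
    define Y where "Y = \<lfloor>real n * y\<rfloor>"
    define a where "a = real n * f x (real_of_int Y / real n)"
    define b where "b = real n * f x y"
    have H: "\<Phi> f (real n * x) Y = Hf (\<lambda>x. real n * f (x / real n) (real_of_int Y / real n)) (real n * x)"
      by (simp add: \<Phi>_def)
    have ua: "real n * f (real n * x / real n) (real_of_int Y / real n) = a" using npos by (simp add: a_def)
    have Yle: "real_of_int Y / real n \<le> y" using npos unfolding Y_def
      by (simp add: divide_le_eq mult.commute)
    have ylt: "y - real_of_int Y / real n \<le> 1 / real n"
    proof -
      have "real n * y < real_of_int Y + 1" unfolding Y_def by linarith
      hence "y < (real_of_int Y + 1) / real n" using npos by (simp add: less_divide_eq mult.commute)
      thus ?thesis by (simp add: add_divide_distrib)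
    qed
    have m: "f x y - f x (real_of_int Y / real n) \<in> {-(y - real_of_int Y / real n)..0}"
      by (rule mono[OF f Yle])
    have b1: "a - 1 \<le> b"
    proof -
      have "- (1 / real n) \<le> f x y - f x (real_of_int Y / real n)" using m ylt by auto
      hence "real n * (- (1 / real n)) \<le> real n * (f x y - f x (real_of_int Y / real n))"
        using npos by (intro mult_left_mono) auto
      thus ?thesis using npos by (simp add: a_def b_def right_diff_distrib)
    qed
    have b2: "b \<le> a"
    proof -
      have "f x y - f x (real_of_int Y / real n) \<le> 0" using m by auto
      hence "real n * (f x y - f x (real_of_int Y / real n)) \<le> 0" using npos by (simp add: mult_nonneg_nonpos)
      thus ?thesis by (simp add: a_def b_def right_diff_distrib)
    qed
    define h where "h = \<Phi> f (real n * x) Y"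
    have hb: "\<lfloor>a\<rfloor> \<le> h" "h \<le> \<lfloor>a\<rfloor> + 1" unfolding h_def H using Hf_bounds ua by metis+
    have "real_of_int h \<le> a + 1" "a - 1 < real_of_int h" using hb by linarith+
    hence "\<bar>real_of_int h - b\<bar> \<le> 2" using b1 b2 by linarith
    hence "\<bar>real_of_int h - b\<bar> / real n \<le> 2 / real n" using npos by (simp add: divide_right_mono)
    moreover have "\<bar>real_of_int h - b\<bar> / real n = \<bar>real_of_int h / real n - f x y\<bar>"
    proof -
      have "real_of_int h / real n - f x y = (real_of_int h - b) / real n"
        using npos by (simp add: b_def field_simps)
      thus ?thesis using npos by (simp add: abs_divide)
    qed
    ultimately show ?thesis by (simp add: h_def Y_def)
  qed
  show ?thesis using P1 P2 P3 by blast
qed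

end
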